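(* Let $\mathbb C^2_*=\mathbb C^2\setminus\{0\}$, $\Delta$ the open unit disc, and $\phi(v)=\frac{v+1/2}{1+v/2}$. Let $\mathbb Z$ act on $\mathbb C^2_*\times\Delta$ by $n\cdot(z,v)=(2^nz,\phi^n(v))$ and let $\Omega=(\mathbb C^2_*\times\Delta)/\mathbb Z$ (a flat disc bundle over the Hopf surface). Let $A=\Delta/\{\phi^n:n\in\mathbb Z\}$. Then $\Omega$ is biholomorphic to the product $A\times\mathbb C^2_*$. *)

theory Defs
  imports "HOL-Analysis.Analysis"
begin

definition cscale :: "complex \<Rightarrow> complex^'n \<Rightarrow> complex^'n" where
  "cscale c x = (\<chi> i. c * x $ i)"

definition holo_map :: "(complex^'n \<Rightarrow> complex^'m) \<Rightarrow> (complex^'n) set \<Rightarrow> bool" where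
  "holo_map f U \<longleftrightarrow> open U \<and>
     (\<forall>x\<in>U. \<exists>L. (f has_derivative L) (at x) \<and> (\<forall>c y. L (cscale c y) = cscale c (L y)))"

text \<open>A map between quotient spaces P = proj ` X and Q = rho ` Y (X, Y open in complex
  coordinate spaces, proj and rho the quotient projections, which are local biholomorphisms)
  is holomorphic iff it lifts locally to holomorphic maps.\<close>
definition quot_holo ::
  "(complex^'n) set \<Rightarrow> (complex^'n \<Rightarrow> 'p) \<Rightarrow> (complex^'m) set \<Rightarrow> (complex^'m \<Rightarrow> 'q)
     \<Rightarrow> ('p \<Rightarrow> 'q) \<Rightarrow> bool" where
  "quot_holo X proj Y rho f \<longleftrightarrow>
     (\<forall>x\<in>X. \<exists>U g. x \<in> U \<and> U \<subseteq> X \<and> holo_map g U \<and> g ` U \<subseteq> Y \<and>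
        (\<forall>u\<in>U. f (proj u) = rho (g u)))"

definition unit_disc :: "complex set" where
  "unit_disc = ball 0 1"

definition C2star :: "(complex \<times> complex) set" where
  "C2star = UNIV - {(0, 0)}"

definition hopf_phi :: "complex \<Rightarrow> complex" where
  "hopf_phi v = (v + 1/2) / (1 + v/2)"

definition hopf_phi_inv :: "complex \<Rightarrow> complex" where
  "hopf_phi_inv v = (v - 1/2) / (1 - v/2)"

definition phi_int :: "int \<Rightarrow> complex \<Rightarrow> complex" where
  "phi_int n = (if n \<ge> 0 then hopf_phi ^^ nat n else hopf_phi_inv ^^ nat (- n))"

text \<open>Covering space C^2_* x Delta, as a subset of C^3 (coordinates 1,2: z; coordinate 3: v).\<close>
definition Omega_tilde :: "(complex^3) set" where
  "Omega_tilde = {x. (x $ 1, x $ 2) \<noteq> (0, 0) \<and> x $ 3 \<in> unit_disc}"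

definition omega_act :: "int \<Rightarrow> complex^3 \<Rightarrow> complex^3" where
  "omega_act n x = (\<chi> i. if i = 3 then phi_int n (x $ 3) else (2::complex) powi n * x $ i)"

definition omega_orbit :: "complex^3 \<Rightarrow> (complex^3) set" where
  "omega_orbit x = range (\<lambda>n. omega_act n x)"

definition Omega :: "(complex^3) set set" where
  "Omega = omega_orbit ` Omega_tilde"

definition disc_orbit :: "complex \<Rightarrow> complex set" where
  "disc_orbit v = range (\<lambda>n. phi_int n v)"

definition A_annulus :: "complex set set" where
  "A_annulus = disc_orbit ` unit_disc"

text \<open>Covering Delta x C^2_* of A x C^2_*, as a subset of C^3, with its projection.\<close>
definition AC_tilde :: "(complex^3) set" where
  "AC_tilde = {y. y $ 1 \<in> unit_disc \<and> (y $ 2, y $ 3) \<noteq> (0, 0)}"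

definition AC_proj :: "complex^3 \<Rightarrow> complex set \<times> (complex \<times> complex)" where
  "AC_proj y = (disc_orbit (y $ 1), (y $ 2, y $ 3))"

end

theory Submission
  imports Defs
begin

lemma bl_axis: "bounded_linear (axis j :: 'a::real_normed_vector \<Rightarrow> 'a^'m)"
proof (rule bounded_linear_intro[where K=1])
  fix x y :: 'a and r :: real
  show "axis j (x + y) = (axis j x :: 'a^'m) + axis j y" by (simp add: vec_eq_iff axis_def)
  show "axis j (r *\<^sub>R x) = r *\<^sub>R (axis j x :: 'a^'m)" by (simp add: vec_eq_iff axis_def)
  have "norm (axis j x :: 'a^'m) = norm x"
    unfolding norm_vec_def L2_set_def axis_def
    by (simp add: if_distrib[of "\<lambda>t. (norm t)\<^sup>2"] sum.delta cong: if_cong)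
  then show "norm (axis j x :: 'a^'m) \<le> norm x * 1" by simp
qed

lemma holo_by_components:
  fixes G :: "complex^'n \<Rightarrow> complex^'m"
  assumes U: "open U"
  and D: "\<And>x j. x \<in> U \<Longrightarrow> \<exists>L. ((\<lambda>u. G u $ j) has_derivative L) (at x) \<and> (\<forall>c h. L (cscale c h) = c * L h)"
  shows "holo_map G U"
  unfolding holo_map_def
proof (intro conjI U ballI)
  fix x assume x: "x \<in> U"
  from D[OF x] obtain L where L: "\<And>j. ((\<lambda>u. G u $ j) has_derivative L j) (at x) \<and> (\<forall>c h. L j (cscale c h) = c * L j h)"
    by metis
  have eq: "G = (\<lambda>u. \<Sum>j\<in>UNIV. axis j (G u $ j))"
    by (rule ext) (simp add: vec_eq_iff sum_component axis_def)
  have "((\<lambda>u. \<Sum>j\<in>UNIV. axis j (G u $ j)) has_derivative (\<lambda>h. \<Sum>j\<in>UNIV. axis j (L j h))) (at x)"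
    apply (rule has_derivative_sum)
    apply (rule bounded_linear.has_derivative[where f="axis _"])
    using L bl_axis by auto
  moreover have "(\<lambda>h. \<Sum>j\<in>UNIV. axis j (L j h)) = (\<lambda>h. \<chi> j. L j h)"
    by (rule ext) (simp add: vec_eq_iff sum_component axis_def)
  ultimately have "(G has_derivative (\<lambda>h. \<chi> j. L j h)) (at x)" using eq by simp
  moreover have "\<forall>c y. (\<lambda>h. \<chi> j. L j h) (cscale c y) = cscale c ((\<lambda>h. \<chi> j. L j h) y)"
    using L by (simp add: cscale_def vec_eq_iff)
  ultimately show "\<exists>L. (G has_derivative L) (at x) \<and> (\<forall>c y. L (cscale c y) = cscale c (L y))"
    by blast
qed

lemma comp_deriv:
  fixes k :: "complex \<Rightarrow> complex"
  assumes k: "k holomorphic_on unit_disc" and xj: "x $ j \<in> unit_disc"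
  shows "\<exists>L. ((\<lambda>u. u $ i * k (u $ j)) has_derivative L) (at x) \<and> (\<forall>c h. L (cscale c h) = c * L h)"
proof -
  have "(k has_field_derivative deriv k (x$j)) (at (x$j))"
    using k xj by (intro holomorphic_derivI[of _ unit_disc]) (auto simp: unit_disc_def)
  then have d1: "(k has_derivative (\<lambda>h. deriv k (x$j) * h)) (at (x$j))"
    by (simp add: has_field_derivative_def)
  have dj: "((\<lambda>u. u $ j) has_derivative (\<lambda>h. h $ j)) (at x)"
    by (rule bounded_linear.has_derivative) auto
  have di: "((\<lambda>u. u $ i) has_derivative (\<lambda>h. h $ i)) (at x)"
    by (rule bounded_linear.has_derivative) auto
  have dk: "((\<lambda>u. k (u $ j)) has_derivative (\<lambda>h. deriv k (x$j) * h $ j)) (at x)"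
    using has_derivative_compose[OF dj d1] by (simp add: o_def)
  have "((\<lambda>u. u $ i * k (u $ j)) has_derivative (\<lambda>h. x $ i * (deriv k (x$j) * h $ j) + h $ i * k (x $ j))) (at x)"
    by (rule has_derivative_mult[OF di dk])
  moreover have "\<forall>c h. (\<lambda>h. x $ i * (deriv k (x$j) * h $ j) + h $ i * k (x $ j)) (cscale c h)
      = c * (\<lambda>h. x $ i * (deriv k (x$j) * h $ j) + h $ i * k (x $ j)) h"
    by (simp add: cscale_def algebra_simps)
  ultimately show ?thesis by blast
qed

lemma proj_deriv:
  "\<exists>L. ((\<lambda>u::complex^'n. u $ j) has_derivative L) (at x) \<and> (\<forall>c h. L (cscale c h) = c * L h)"
  by (rule exI[of _ "\<lambda>h. h $ j"]) (auto simp: cscale_def intro: bounded_linear.has_derivative)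

lemma disc_iff: "v \<in> unit_disc \<longleftrightarrow> norm v < 1"
  by (simp add: unit_disc_def)

lemma norm_lt_sq: "norm (a::complex) < norm b \<longleftrightarrow> (Re a)\<^sup>2 + (Im a)\<^sup>2 < (Re b)\<^sup>2 + (Im b)\<^sup>2"
proof -
  have "norm a < norm b \<longleftrightarrow> (norm a)\<^sup>2 < (norm b)\<^sup>2"
    by (meson norm_ge_zero power_less_imp_less_base power_strict_mono zero_less_numeral)
  then show ?thesis by (simp add: cmod_power2)
qed

lemma disc_ne0: assumes "norm (v::complex) < 1" shows "1 + v/2 \<noteq> 0" "1 - v/2 \<noteq> 0" "1 - v \<noteq> 0" "v \<noteq> 1" "v \<noteq> -2" "v \<noteq> 2"
proof -
  show a: "v \<noteq> -2" "v \<noteq> 2" "v \<noteq> 1" using assms by auto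
  show "1 - v \<noteq> 0" using a by auto
  have "1 + v/2 = (v + 2)/2" "1 - v/2 = (2 - v)/2" by (simp_all add: field_simps)
  then show "1 + v/2 \<noteq> 0" "1 - v/2 \<noteq> 0" using a by (auto simp: add_eq_0_iff)
qed

lemma disc_ne: assumes "v \<in> unit_disc" shows "1 + v/2 \<noteq> 0" "1 - v/2 \<noteq> 0" "1 - v \<noteq> 0" "v \<noteq> 1" "v \<noteq> -2" "v \<noteq> 2"
  using disc_ne0[of v] assms by (auto simp: disc_iff)

lemma phi_inv_phi0: fixes v :: complex assumes a: "1 + v/2 \<noteq> 0" shows "hopf_phi_inv (hopf_phi v) = v"
proof -
  define w where "w = hopf_phi v"
  have w: "w * (1 + v/2) = v + 1/2" using a unfolding w_def hopf_phi_def by simp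
  have w2: "1 - w/2 \<noteq> 0"
  proof
    assume "1 - w/2 = 0" then have "w = 2" by simp
    then show False using w by (simp add: algebra_simps)
  qed
  have "w - 1/2 = v * (1 - w/2)" using w by (simp add: algebra_simps)
  then have "(w - 1/2) / (1 - w/2) = v" using w2 by (simp add: divide_eq_eq)
  then show ?thesis unfolding hopf_phi_inv_def w_def .
qed

lemma phi_phi_inv0: fixes v :: complex assumes a: "1 - v/2 \<noteq> 0" shows "hopf_phi (hopf_phi_inv v) = v"
proof -
  define w where "w = hopf_phi_inv v"
  have w: "w * (1 - v/2) = v - 1/2" using a unfolding w_def hopf_phi_inv_def by simp
  have w2: "1 + w/2 \<noteq> 0"
  proof
    assume "1 + w/2 = 0" then have "w = -2" by (simp add: add_eq_0_iff)
    then show False using w by (simp add: algebra_simps)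
  qed
  have "w + 1/2 = v * (1 + w/2)" using w by (simp add: algebra_simps)
  then have "(w + 1/2) / (1 + w/2) = v" using w2 by (simp add: divide_eq_eq)
  then show ?thesis unfolding hopf_phi_def w_def .
qed

lemma aux1: fixes a b :: real shows "(a+1/2)\<^sup>2 + b\<^sup>2 - ((1+a/2)\<^sup>2 + (b/2)\<^sup>2) = 3/4*(a\<^sup>2+b\<^sup>2-1)"
  by (simp add: power2_eq_square field_simps)
lemma aux2: fixes a b :: real shows "(a-1/2)\<^sup>2 + b\<^sup>2 - ((1-a/2)\<^sup>2 + (b/2)\<^sup>2) = 3/4*(a\<^sup>2+b\<^sup>2-1)"
  by (simp add: power2_eq_square field_simps)

lemma phi_disc: assumes "v \<in> unit_disc" shows "hopf_phi v \<in> unit_disc"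
proof -
  have v: "(Re v)\<^sup>2 + (Im v)\<^sup>2 < 1" using assms norm_lt_sq[of v 1] by (simp add: disc_iff)
  have "norm (v + 1/2) < norm (1 + v/2)"
    unfolding norm_lt_sq using v aux1[of "Re v" "Im v"] by simp
  moreover have "1 + v/2 \<noteq> 0" using disc_ne[OF assms] by simp
  ultimately show ?thesis unfolding hopf_phi_def disc_iff by (simp add: norm_divide divide_less_eq)
qed

lemma phi_inv_disc: assumes "v \<in> unit_disc" shows "hopf_phi_inv v \<in> unit_disc"
proof -
  have v: "(Re v)\<^sup>2 + (Im v)\<^sup>2 < 1" using assms norm_lt_sq[of v 1] by (simp add: disc_iff)
  have "norm (v - 1/2) < norm (1 - v/2)"
    unfolding norm_lt_sq using v aux2[of "Re v" "Im v"] by simp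
  moreover have "1 - v/2 \<noteq> 0" using disc_ne[OF assms] by simp
  ultimately show ?thesis unfolding hopf_phi_inv_def disc_iff by (simp add: norm_divide divide_less_eq)
qed

lemma phi_inv_phi: assumes "v \<in> unit_disc" shows "hopf_phi_inv (hopf_phi v) = v"
  using phi_inv_phi0 disc_ne[OF assms] by blast

lemma phi_phi_inv: assumes "v \<in> unit_disc" shows "hopf_phi (hopf_phi_inv v) = v"
  using phi_phi_inv0 disc_ne[OF assms] by blast

lemma phi_int_nonneg: "phi_int (int k) = hopf_phi ^^ k" by (simp add: phi_int_def)
lemma phi_int_neg: "phi_int (- int k) = hopf_phi_inv ^^ k" by (cases "k = 0") (simp_all add: phi_int_def)

lemma funpow_disc: assumes "\<And>w. w \<in> unit_disc \<Longrightarrow> f w \<in> unit_disc" "v \<in> unit_disc"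
  shows "(f ^^ k) v \<in> unit_disc"
  using assms by (induction k) auto

lemma phi_int_disc: assumes "v \<in> unit_disc" shows "phi_int n v \<in> unit_disc"
  unfolding phi_int_def using funpow_disc[OF phi_disc assms] funpow_disc[OF phi_inv_disc assms] by auto

lemma phi_int_0: "phi_int 0 v = v" by (simp add: phi_int_def)

lemma phi_int_succ: assumes "v \<in> unit_disc" shows "phi_int (n + 1) v = hopf_phi (phi_int n v)"
proof (cases "n \<ge> 0")
  case True
  then obtain k where "n = int k" by (metis nonneg_eq_int)
  then show ?thesis by (simp add: phi_int_def nat_add_distrib)
next
  case False
  define k where "k = nat (- n) - 1"
  have k: "n = - int (Suc k)" using False unfolding k_def by simp
  then have "n + 1 = - int k" by simp
  then have "phi_int (n+1) v = (hopf_phi_inv ^^ k) v" by (simp add: phi_int_neg)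
  moreover have "phi_int n v = hopf_phi_inv ((hopf_phi_inv ^^ k) v)" using k phi_int_neg[of "Suc k"] by simp
  ultimately show ?thesis using phi_phi_inv funpow_disc[OF phi_inv_disc assms] by simp
qed

lemma phi_int_pred: assumes "v \<in> unit_disc" shows "phi_int (n - 1) v = hopf_phi_inv (phi_int n v)"
  using phi_int_succ[OF assms, of "n-1"] phi_inv_phi[OF phi_int_disc[OF assms, of "n-1"]] by simp

lemma phi_int_add: assumes "v \<in> unit_disc" shows "phi_int (m + n) v = phi_int m (phi_int n v)"
proof (induction m rule: int_induct[where k=0])
  case base then show ?case by (simp add: phi_int_0)
next
  case (step1 i)
  have "phi_int (i + 1 + n) v = hopf_phi (phi_int (i + n) v)"
    using phi_int_succ[OF assms, of "i+n"] by (simp add: ac_simps)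
  also have "\<dots> = hopf_phi (phi_int i (phi_int n v))" using step1 by simp
  also have "\<dots> = phi_int (i + 1) (phi_int n v)" using phi_int_succ[OF phi_int_disc[OF assms]] by simp
  finally show ?case .
next
  case (step2 i)
  have "phi_int (i - 1 + n) v = hopf_phi_inv (phi_int (i + n) v)"
    by (subst diff_add_eq) (rule phi_int_pred[OF assms])
  also have "\<dots> = hopf_phi_inv (phi_int i (phi_int n v))" using step2 by simp
  also have "\<dots> = phi_int (i - 1) (phi_int n v)" using phi_int_pred[OF phi_int_disc[OF assms]] by simp
  finally show ?case .
qed

definition Wf :: "complex \<Rightarrow> complex" where "Wf v = (1 + v) / (1 - v)"
definition cc :: real where "cc = ln 2 / ln 3"
definition gf :: "complex \<Rightarrow> complex" where "gf v = exp (of_real cc * Ln (Wf v))"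
definition gi :: "complex \<Rightarrow> complex" where "gi v = 1 / gf v"

lemma Wf_Re: assumes "v \<in> unit_disc" shows "Re (Wf v) > 0"
proof -
  have v: "(Re v)\<^sup>2 + (Im v)\<^sup>2 < 1" using assms norm_lt_sq[of v 1] by (simp add: disc_iff)
  have ne: "1 - v \<noteq> 0" using disc_ne[OF assms] by simp
  have "(Re (1 - v))\<^sup>2 + (Im (1 - v))\<^sup>2 > 0" using ne
    by (metis complex_eq_0 less_le sum_power2_ge_zero)
  moreover have "Re (1 + v) * Re (1 - v) + Im (1 + v) * Im (1 - v) > 0"
    using v by (simp add: power2_eq_square algebra_simps)
  ultimately show ?thesis unfolding Wf_def Re_divide by simp
qed

lemma Wf_nonpos: assumes "v \<in> unit_disc" shows "Wf v \<notin> \<real>\<^sub>\<le>\<^sub>0" "Wf v \<noteq> 0"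
  using Wf_Re[OF assms] by (auto simp: complex_nonpos_Reals_iff)

lemma Wf_phi: assumes "v \<in> unit_disc" shows "Wf (hopf_phi v) = 3 * Wf v"
proof -
  define w where "w = hopf_phi v"
  have d: "1 + v/2 \<noteq> 0" "1 - v \<noteq> 0" using disc_ne[OF assms] by auto
  have w: "w * (1 + v/2) = v + 1/2" using d unfolding w_def hopf_phi_def by simp
  have "(1 + w) * (1 + v/2) = (1 + v/2) + w * (1 + v/2)" by (simp add: algebra_simps)
  also have "\<dots> = (1 + v/2) + (v + 1/2)" by (simp only: w)
  also have "\<dots> = 3/2 * (1 + v)" by simp
  finally have h1: "(1 + w) * (1 + v/2) = 3/2 * (1 + v)" .
  have "(1 - w) * (1 + v/2) = (1 + v/2) - w * (1 + v/2)" by (simp add: left_diff_distrib)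
  also have "\<dots> = (1 + v/2) - (v + 1/2)" by (simp only: w)
  also have "\<dots> = 1/2 * (1 - v)" by simp
  finally have h2: "(1 - w) * (1 + v/2) = 1/2 * (1 - v)" .
  have "(1 + w) / (1 - w) = ((1 + w) * (1 + v/2)) / ((1 - w) * (1 + v/2))"
    by (rule nonzero_mult_divide_mult_cancel_right[symmetric, OF d(1)])
  also have "\<dots> = (3/2 * (1 + v)) / (1/2 * (1 - v))" by (simp only: h1 h2)
  also have "\<dots> = 3 * ((1 + v) / (1 - v))" using d by (simp add: field_simps)
  finally show ?thesis unfolding Wf_def w_def .
qed

lemma gf_phi: assumes "v \<in> unit_disc" shows "gf (hopf_phi v) = 2 * gf v"
proof -
  have "Ln (Wf (hopf_phi v)) = Ln (of_real 3 * Wf v)" using Wf_phi[OF assms] by simp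
  also have "\<dots> = of_real (ln 3) + Ln (Wf v)" using Ln_times_of_real[of 3 "Wf v"] Wf_nonpos[OF assms] Ln_of_real[of 3] by simp
  finally have e: "Ln (Wf (hopf_phi v)) = of_real (ln 3) + Ln (Wf v)" .
  have c: "of_real cc * of_real (ln 3) = (of_real (ln 2) :: complex)"
  proof -
    have "cc * ln 3 = ln 2" unfolding cc_def by simp
    then show ?thesis by (simp flip: of_real_mult)
  qed
  have "gf (hopf_phi v) = exp (of_real cc * of_real (ln 3) + of_real cc * Ln (Wf v))"
    unfolding gf_def e by (simp add: algebra_simps)
  also have "\<dots> = exp (of_real (ln 2)) * gf v" unfolding c gf_def by (simp add: exp_add)
  also have "exp (of_real (ln 2)) = (2::complex)" using exp_of_real[of "ln 2"] by simp
  finally show ?thesis .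
qed

lemma gf_phi_inv: assumes "v \<in> unit_disc" shows "gf (hopf_phi_inv v) = gf v / 2"
  using gf_phi[OF phi_inv_disc[OF assms]] phi_phi_inv[OF assms] by simp

lemma gf_nz: "gf v \<noteq> 0" by (simp add: gf_def)

lemma gf_phi_int: assumes "v \<in> unit_disc" shows "gf (phi_int n v) = 2 powi n * gf v"
proof (induction n rule: int_induct[where k=0])
  case base then show ?case by (simp add: phi_int_0)
next
  case (step1 i)
  have "gf (phi_int (i + 1) v) = 2 * gf (phi_int i v)"
    using phi_int_succ[OF assms] gf_phi[OF phi_int_disc[OF assms]] by simp
  then show ?case using step1 by (simp add: power_int_add_1)
next
  case (step2 i)
  have "gf (phi_int (i - 1) v) = gf (phi_int i v) / 2"
    using phi_int_pred[OF assms] gf_phi_inv[OF phi_int_disc[OF assms]] by simp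
  moreover have "(2::complex) powi i = 2 powi (i - 1) * 2"
    using power_int_add_1[of "2::complex" "i - 1"] by simp
  ultimately show ?case using step2 by simp
qed

lemma gi_phi_int: assumes "v \<in> unit_disc" shows "gi (phi_int n v) = gi v / 2 powi n"
  using gf_phi_int[OF assms] by (simp add: gi_def)

lemma gf_holo: "gf holomorphic_on unit_disc"
proof -
  have hW: "Wf holomorphic_on unit_disc" unfolding Wf_def
    using disc_ne by (intro holomorphic_intros) auto
  have hL: "(\<lambda>v. Ln (Wf v)) holomorphic_on unit_disc"
    apply (rule holomorphic_on_Ln'[rotated])
     apply (rule hW)
    by (rule Wf_nonpos(1))
  show ?thesis unfolding gf_def
    by (intro holomorphic_on_exp' holomorphic_on_mult holomorphic_on_const hL)
qed

lemma gi_holo: "gi holomorphic_on unit_disc"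
  unfolding gi_def using gf_holo gf_nz by (intro holomorphic_intros) auto

definition Fx :: "complex^3 \<Rightarrow> complex set \<times> (complex \<times> complex)" where
  "Fx x = (disc_orbit (x$3), (x$1 * gi (x$3), x$2 * gi (x$3)))"

definition Fmap :: "(complex^3) set \<Rightarrow> complex set \<times> (complex \<times> complex)" where
  "Fmap P = Fx (SOME x. x \<in> Omega_tilde \<and> omega_orbit x = P)"

lemma three_ne: "(1::3) \<noteq> 3" "(2::3) \<noteq> 3" "(1::3) \<noteq> 2" by simp_all

lemma vec3_eq: "(x::'a^3) = y \<longleftrightarrow> x$1 = y$1 \<and> x$2 = y$2 \<and> x$3 = y$3"
proof
  assume h: "x$1 = y$1 \<and> x$2 = y$2 \<and> x$3 = y$3"
  show "x = y" unfolding vec_eq_iff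
  proof
    fix i :: 3
    show "x $ i = y $ i" using exhaust_3[of i] h by auto
  qed
qed simp

lemma Ot_iff: "x \<in> Omega_tilde \<longleftrightarrow> (x$1, x$2) \<noteq> (0,0) \<and> x$3 \<in> unit_disc"
  by (simp add: Omega_tilde_def)

lemma act_comp: "omega_act n x $ 1 = 2 powi n * x $ 1" "omega_act n x $ 2 = 2 powi n * x $ 2"
  "omega_act n x $ 3 = phi_int n (x $ 3)"
  by (simp_all add: omega_act_def)

lemma omega_act_0: "omega_act 0 x = x"
  by (simp add: vec3_eq act_comp phi_int_0)

lemma omega_act_add: assumes "x $ 3 \<in> unit_disc"
  shows "omega_act m (omega_act n x) = omega_act (m + n) x"
  using assms by (simp add: vec3_eq act_comp phi_int_add power_int_add)

lemma omega_act_Ot: assumes "x \<in> Omega_tilde" shows "omega_act n x \<in> Omega_tilde"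
  using assms by (simp add: Ot_iff act_comp phi_int_disc)

lemma orbit_act: assumes "x $ 3 \<in> unit_disc"
  shows "omega_orbit (omega_act n x) = omega_orbit x"
  unfolding omega_orbit_def
proof (intro equalityI subsetI)
  fix y assume "y \<in> range (\<lambda>m. omega_act m (omega_act n x))"
  then obtain m where "y = omega_act m (omega_act n x)" by auto
  then have "y = omega_act (m + n) x" using omega_act_add[OF assms] by simp
  then show "y \<in> range (\<lambda>m. omega_act m x)" by auto
next
  fix y assume "y \<in> range (\<lambda>m. omega_act m x)"
  then obtain m where "y = omega_act m x" by auto
  then have "y = omega_act (m - n) (omega_act n x)" using omega_act_add[OF assms, of "m - n" n] by simp
  then show "y \<in> range (\<lambda>m. omega_act m (omega_act n x))" by auto
qed

lemma in_orbit: "x \<in> omega_orbit x"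
  unfolding omega_orbit_def using omega_act_0[of x] by (metis rangeI)

lemma orbit_eq: assumes "omega_orbit x = omega_orbit y" shows "\<exists>n. y = omega_act n x"
  using in_orbit[of y] assms unfolding omega_orbit_def by auto

lemma disc_orbit_phi: assumes "v \<in> unit_disc" shows "disc_orbit (phi_int n v) = disc_orbit v"
  unfolding disc_orbit_def
proof (intro equalityI subsetI)
  fix y assume "y \<in> range (\<lambda>m. phi_int m (phi_int n v))"
  then obtain m where "y = phi_int m (phi_int n v)" by auto
  then have "y = phi_int (m + n) v" using phi_int_add[OF assms] by simp
  then show "y \<in> range (\<lambda>m. phi_int m v)" by auto
next
  fix y assume "y \<in> range (\<lambda>m. phi_int m v)"
  then obtain m where "y = phi_int m v" by auto
  then have "y = phi_int (m - n) (phi_int n v)" using phi_int_add[OF assms, of "m - n" n] by simp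
  then show "y \<in> range (\<lambda>m. phi_int m (phi_int n v))" by auto
qed

lemma Fx_act: assumes "x $ 3 \<in> unit_disc" shows "Fx (omega_act n x) = Fx x"
proof -
  have nz: "(2::complex) powi n \<noteq> 0" by simp
  show ?thesis
    using assms nz unfolding Fx_def
    by (simp add: act_comp disc_orbit_phi gi_phi_int)
qed

lemma Fmap_orbit: assumes "x \<in> Omega_tilde" shows "Fmap (omega_orbit x) = Fx x"
proof -
  define y where "y = (SOME y. y \<in> Omega_tilde \<and> omega_orbit y = omega_orbit x)"
  have "y \<in> Omega_tilde \<and> omega_orbit y = omega_orbit x"
    unfolding y_def by (rule someI[of _ x]) (simp add: assms)
  then obtain n where "y = omega_act n x" using orbit_eq by metis
  then have "Fx y = Fx x" using Fx_act assms by (simp add: Ot_iff)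
  then show ?thesis unfolding Fmap_def y_def[symmetric] .
qed

lemma gi_nz: "gi v \<noteq> 0" by (simp add: gi_def gf_nz)

lemma Fmap_inj: "inj_on Fmap Omega"
proof (rule inj_onI)
  fix P Q assume "P \<in> Omega" "Q \<in> Omega" and eq: "Fmap P = Fmap Q"
  then obtain x y where x: "x \<in> Omega_tilde" "P = omega_orbit x"
    and y: "y \<in> Omega_tilde" "Q = omega_orbit y" by (auto simp: Omega_def)
  have e: "Fx x = Fx y" using eq x y Fmap_orbit by simp
  then have "disc_orbit (x$3) = disc_orbit (y$3)" by (simp add: Fx_def)
  then have "y$3 \<in> disc_orbit (x$3)" unfolding disc_orbit_def using phi_int_0 by (metis rangeI)
  then obtain n where n: "y$3 = phi_int n (x$3)" unfolding disc_orbit_def by auto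
  define x' where "x' = omega_act n x"
  have x3: "x $ 3 \<in> unit_disc" using x by (simp add: Ot_iff)
  have "Fx x' = Fx y" using e Fx_act[OF x3] unfolding x'_def by simp
  moreover have x'3: "x' $ 3 = y $ 3" using n unfolding x'_def by (simp add: act_comp)
  ultimately have "x' $ 1 * gi (y$3) = y $ 1 * gi (y$3)" "x' $ 2 * gi (y$3) = y $ 2 * gi (y$3)"
    by (simp_all add: Fx_def)
  then have "x' $ 1 = y $ 1" "x' $ 2 = y $ 2" using gi_nz by simp_all
  then have "x' = y" using x'3 by (simp add: vec3_eq)
  then have "omega_orbit y = omega_orbit x" using orbit_act[OF x3, of n] unfolding x'_def by simp
  then show "P = Q" using x y by simp
qed

lemma Fmap_image: "Fmap ` Omega = A_annulus \<times> C2star"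
proof (intro equalityI subsetI)
  fix z assume "z \<in> Fmap ` Omega"
  then obtain x where x: "x \<in> Omega_tilde" "z = Fx x" by (auto simp: Omega_def Fmap_orbit)
  then show "z \<in> A_annulus \<times> C2star"
    using gi_nz[of "x$3"] by (auto simp: Fx_def A_annulus_def C2star_def Ot_iff)
next
  fix z assume "z \<in> A_annulus \<times> C2star"
  then obtain v a b where z: "z = (disc_orbit v, (a, b))" "v \<in> unit_disc" "(a, b) \<noteq> (0, 0)"
    by (auto simp: A_annulus_def C2star_def)
  define x :: "complex^3" where "x = (\<chi> i. if i = 1 then a * gf v else if i = 2 then b * gf v else v)"
  have xc: "x $ 1 = a * gf v" "x $ 2 = b * gf v" "x $ 3 = v" unfolding x_def by simp_all
  have xO: "x \<in> Omega_tilde" using z gf_nz[of v] by (auto simp: Ot_iff xc)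
  have "Fx x = z" using z gf_nz[of v] by (simp add: Fx_def xc gi_def)
  moreover have "omega_orbit x \<in> Omega" using xO by (simp add: Omega_def)
  ultimately show "z \<in> Fmap ` Omega" using Fmap_orbit[OF xO] by (metis image_eqI)
qed

definition Gf :: "complex^3 \<Rightarrow> complex^3" where
  "Gf u = (\<chi> i. if i = 1 then u$3 else if i = 2 then u$1 * gi (u$3) else u$2 * gi (u$3))"
definition Gi :: "complex^3 \<Rightarrow> complex^3" where
  "Gi y = (\<chi> i. if i = 1 then y$2 * gf (y$1) else if i = 2 then y$3 * gf (y$1) else y$1)"

lemma Gf_c: "Gf u $ 1 = u$3" "Gf u $ 2 = u$1 * gi (u$3)" "Gf u $ 3 = u$2 * gi (u$3)"
  by (simp_all add: Gf_def)
lemma Gi_c: "Gi y $ 1 = y$2 * gf (y$1)" "Gi y $ 2 = y$3 * gf (y$1)" "Gi y $ 3 = y$1"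
  by (simp_all add: Gi_def)

lemma AC_iff: "y \<in> AC_tilde \<longleftrightarrow> y$1 \<in> unit_disc \<and> (y$2, y$3) \<noteq> (0,0)"
  by (simp add: AC_tilde_def)

lemma open_Ot: "open Omega_tilde"
proof -
  have e: "Omega_tilde = ((\<lambda>x. x$1) -` (-{0}) \<union> (\<lambda>x. x$2) -` (-{0})) \<inter> (\<lambda>x::complex^3. x$3) -` unit_disc"
    unfolding Omega_tilde_def by auto
  show ?thesis unfolding e
    by (intro open_Int open_Un open_vimage_vec_nth open_Compl closed_singleton) (simp add: unit_disc_def)
qed
lemma open_AC: "open AC_tilde"
proof -
  have e: "AC_tilde = ((\<lambda>x. x$2) -` (-{0}) \<union> (\<lambda>x. x$3) -` (-{0})) \<inter> (\<lambda>x::complex^3. x$1) -` unit_disc"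
    unfolding AC_tilde_def by auto
  show ?thesis unfolding e
    by (intro open_Int open_Un open_vimage_vec_nth open_Compl closed_singleton) (simp add: unit_disc_def)
qed

lemma holo_Gf: "holo_map Gf Omega_tilde"
proof (rule holo_by_components[OF open_Ot])
  fix x and j :: 3 assume x: "x \<in> Omega_tilde"
  then have x3: "x $ 3 \<in> unit_disc" by (simp add: Ot_iff)
  consider "j = 1" | "j = 2" | "j = 3" using exhaust_3[of j] by auto
  then show "\<exists>L. ((\<lambda>u. Gf u $ j) has_derivative L) (at x) \<and> (\<forall>c h. L (cscale c h) = c * L h)"
  proof cases
    case 1 then show ?thesis using proj_deriv[of 3 x] by (simp add: Gf_c)
  next
    case 2 then show ?thesis using comp_deriv[OF gi_holo x3, of 1] by (simp add: Gf_c)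
  next
    case 3 then show ?thesis using comp_deriv[OF gi_holo x3, of 2] by (simp add: Gf_c)
  qed
qed

lemma holo_Gi: "holo_map Gi AC_tilde"
proof (rule holo_by_components[OF open_AC])
  fix x and j :: 3 assume x: "x \<in> AC_tilde"
  then have x1: "x $ 1 \<in> unit_disc" by (simp add: AC_iff)
  consider "j = 1" | "j = 2" | "j = 3" using exhaust_3[of j] by auto
  then show "\<exists>L. ((\<lambda>u. Gi u $ j) has_derivative L) (at x) \<and> (\<forall>c h. L (cscale c h) = c * L h)"
  proof cases
    case 1 then show ?thesis using comp_deriv[OF gf_holo x1, of 2] by (simp add: Gi_c)
  next
    case 2 then show ?thesis using comp_deriv[OF gf_holo x1, of 3] by (simp add: Gi_c)
  next
    case 3 then show ?thesis using proj_deriv[of 1 x] by (simp add: Gi_c)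
  qed
qed

lemma gf_gi: "gf v * gi v = 1" by (simp add: gi_def gf_nz)

lemma qh1: "quot_holo Omega_tilde omega_orbit AC_tilde AC_proj Fmap"
proof -
  have a: "Gf ` Omega_tilde \<subseteq> AC_tilde"
    using gi_nz by (auto simp: Ot_iff AC_iff Gf_c)
  have b: "\<forall>u\<in>Omega_tilde. Fmap (omega_orbit u) = AC_proj (Gf u)"
    by (simp add: Fmap_orbit Fx_def AC_proj_def Gf_c)
  show ?thesis unfolding quot_holo_def using a b holo_Gf by blast
qed

lemma qh2: "quot_holo AC_tilde AC_proj Omega_tilde omega_orbit (inv_into Omega Fmap)"
proof -
  have GiO: "Gi ` AC_tilde \<subseteq> Omega_tilde"
    using gf_nz by (auto simp: Ot_iff AC_iff Gi_c)
  have b: "inv_into Omega Fmap (AC_proj u) = omega_orbit (Gi u)" if u: "u \<in> AC_tilde" for u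
  proof -
    have uO: "Gi u \<in> Omega_tilde" using GiO u by auto
    have "Fmap (omega_orbit (Gi u)) = AC_proj u"
      using gf_gi[of "u$1"] by (simp add: Fmap_orbit[OF uO] Fx_def AC_proj_def Gi_c algebra_simps)
    moreover have "omega_orbit (Gi u) \<in> Omega" using uO by (simp add: Omega_def)
    ultimately show ?thesis
      by (rule inv_into_f_eq[OF Fmap_inj, rotated])
  qed
  show ?thesis unfolding quot_holo_def using GiO b holo_Gi by blast
qed

theorem theorem3p4:
  shows "\<exists>F. bij_betw F Omega (A_annulus \<times> C2star)
            \<and> quot_holo Omega_tilde omega_orbit AC_tilde AC_proj F
            \<and> quot_holo AC_tilde AC_proj Omega_tilde omega_orbit (inv_into Omega F)"
proof (intro exI conjI)
  show "bij_betw Fmap Omega (A_annulus \<times> C2star)"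
    unfolding bij_betw_def using Fmap_inj Fmap_image by blast
  show "quot_holo Omega_tilde omega_orbit AC_tilde AC_proj Fmap" by (rule qh1)
  show "quot_holo AC_tilde AC_proj Omega_tilde omega_orbit (inv_into Omega Fmap)" by (rule qh2)
qed

end
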